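(* Let $D\ge 2$, $\eta=\mathrm{diag}(-1,1,\dots,1)$, and let $g_{\mu\nu}$, $f_{\mu\nu}$ be real symmetric invertible $D\times D$ matrices of Lorentzian signature $(-,+,\dots,+)$, with inverses $g^{\mu\nu}$, $f^{\mu\nu}$. Then there exist real matrices $e_A{}^\mu$ and $L^B{}_\nu$ with $\eta^{AB}e_A{}^\mu e_B{}^\nu=g^{\mu\nu}$ and $\eta_{AB}L^A{}_\mu L^B{}_\nu=f_{\mu\nu}$ such that $e_A{}^\mu L_{B\mu}=e_B{}^\mu L_{A\mu}$ for all $A,B$, if and only if there exists a real matrix $\gamma$ such that (i) $\gamma^\mu{}_\rho\gamma^\rho{}_\nu=g^{\mu\rho}f_{\rho\nu}$ (i.e. $\gamma^2=g^{-1}f$), and (ii) the matrix $f\gamma$ is symmetric.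
   Context: Greek indices are space-time indices and capital Latin indices are Lorentz indices, lowered and raised with $\eta_{AB}$ and $\eta^{AB}$ (so $L_{B\mu}=\eta_{BC}L^C{}_\mu$); repeated indices are summed. *)

theory Defs
  imports "HOL-Analysis.Analysis"
begin

definition minkowski :: "'n \<Rightarrow> real^'n^'n" where
  "minkowski t0 = (\<chi> i j. if i = j then (if i = t0 then -1 else 1) else 0)"

definition symmetric_mat :: "real^'n^'n \<Rightarrow> bool" where
  "symmetric_mat M \<longleftrightarrow> transpose M = M"

text \<open>Lorentzian signature (-,+,...,+): real symmetric invertible matrix congruent
  (Sylvester's law of inertia) to diag(-1,1,...,1).\<close>
definition lorentzian :: "'n \<Rightarrow> real^'n^'n \<Rightarrow> bool" where
  "lorentzian t0 M \<longleftrightarrow> symmetric_mat M \<and> invertible M \<and>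
     (\<exists>P::real^'n^'n. invertible P \<and> transpose P ** M ** P = minkowski t0)"

end

theory Submission
  imports Defs
begin

lemma eta_sq: "minkowski t0 ** minkowski t0 = (mat 1 :: real^'n^'n)"
proof -
  define s :: "'n \<Rightarrow> real" where "s i = (if i = t0 then -1 else 1)" for i
  have s2: "s i * s i = 1" for i by (simp add: s_def)
  have h: "minkowski t0 = (\<chi> i j. if i = j then s i else 0)" unfolding minkowski_def s_def by simp
  have "(\<Sum>k\<in>UNIV. (if i = k then s i else 0) * (if k = j then s k else 0)) = (if i = j then 1 else 0)" for i j
  proof -
    have "(\<lambda>k. (if i = k then s i else 0) * (if k = j then s k else 0)) = (\<lambda>k. if i = k then (s i * (if k = j then s k else 0)) else 0)"
      by auto
    then show ?thesis using s2 by (simp only: sum.delta finite UNIV_I if_True) auto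
  qed
  then show ?thesis unfolding h matrix_matrix_mult_def mat_def by (simp add: vec_eq_iff)
qed

lemma eta_tr: "transpose (minkowski t0) = (minkowski t0 :: real^'n^'n)"
  unfolding minkowski_def transpose_def by (simp add: vec_eq_iff)

theorem proposition3:
  fixes t0 :: "'n::finite" and g f :: "real^'n^'n"
  assumes "CARD('n) \<ge> 2"
    and "lorentzian t0 g" and "lorentzian t0 f"
  shows "(\<exists>e L :: real^'n^'n.
            transpose e ** minkowski t0 ** e = matrix_inv g \<and>
            transpose L ** minkowski t0 ** L = f \<and>
            symmetric_mat (e ** transpose (minkowski t0 ** L)))
         \<longleftrightarrow>
         (\<exists>\<gamma> :: real^'n^'n. \<gamma> ** \<gamma> = matrix_inv g ** f \<and> symmetric_mat (f ** \<gamma>))"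
proof
  let ?h = "minkowski t0 :: real^'n^'n"
  assume "\<exists>e L :: real^'n^'n.
            transpose e ** minkowski t0 ** e = matrix_inv g \<and>
            transpose L ** minkowski t0 ** L = f \<and>
            symmetric_mat (e ** transpose (minkowski t0 ** L))"
  then obtain e L :: "real^'n^'n" where e: "transpose e ** ?h ** e = matrix_inv g"
    and L: "transpose L ** ?h ** L = f" and s: "symmetric_mat (e ** transpose (?h ** L))"
    by blast
  have s': "?h ** L ** transpose e = e ** transpose L ** ?h"
    using s unfolding symmetric_mat_def
    by (simp add: matrix_transpose_mul eta_tr matrix_mul_assoc)
  have Le: "L ** transpose e = ?h ** e ** transpose L ** ?h"
  proof -
    have "L ** transpose e = ?h ** (?h ** L ** transpose e)"
      by (simp add: matrix_mul_assoc eta_sq)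
    also have "\<dots> = ?h ** e ** transpose L ** ?h" using s' by (simp add: matrix_mul_assoc)
    finally show ?thesis .
  qed
  define \<gamma> where "\<gamma> = transpose e ** L"
  have "\<gamma> ** \<gamma> = transpose e ** (L ** transpose e) ** L"
    unfolding \<gamma>_def by (simp add: matrix_mul_assoc)
  also have "\<dots> = (transpose e ** ?h ** e) ** (transpose L ** ?h ** L)"
    unfolding Le by (simp add: matrix_mul_assoc)
  finally have g1: "\<gamma> ** \<gamma> = matrix_inv g ** f" using e L by simp
  have "f ** \<gamma> = transpose L ** (?h ** L ** transpose e) ** L"
    unfolding \<gamma>_def L[symmetric] by (simp add: matrix_mul_assoc)
  also have "\<dots> = transpose L ** (e ** transpose L ** ?h) ** L" using s' by simp
  finally have fg: "f ** \<gamma> = transpose L ** (e ** transpose L ** ?h) ** L" .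
  have "symmetric_mat (f ** \<gamma>)"
    unfolding symmetric_mat_def fg
    using s' by (simp add: matrix_transpose_mul eta_tr matrix_mul_assoc)
  with g1 show "\<exists>\<gamma> :: real^'n^'n. \<gamma> ** \<gamma> = matrix_inv g ** f \<and> symmetric_mat (f ** \<gamma>)"
    by blast
next
  let ?h = "minkowski t0 :: real^'n^'n"
  assume "\<exists>\<gamma> :: real^'n^'n. \<gamma> ** \<gamma> = matrix_inv g ** f \<and> symmetric_mat (f ** \<gamma>)"
  then obtain \<gamma> :: "real^'n^'n" where g1: "\<gamma> ** \<gamma> = matrix_inv g ** f"
    and sg: "symmetric_mat (f ** \<gamma>)" by blast
  have fsym: "transpose f = f" using assms(3) unfolding lorentzian_def symmetric_mat_def by blast
  have gt: "transpose \<gamma> ** f = f ** \<gamma>"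
    using sg fsym unfolding symmetric_mat_def by (simp add: matrix_transpose_mul)
  obtain P :: "real^'n^'n" where Pi: "invertible P" and PfP: "transpose P ** f ** P = ?h"
    using assms(3) unfolding lorentzian_def by blast
  obtain Q :: "real^'n^'n" where PQ: "P ** Q = mat 1" and QP: "Q ** P = mat 1"
    using Pi unfolding invertible_def by blast
  have QPt: "transpose Q ** transpose P = mat 1"
    using PQ by (metis matrix_transpose_mul transpose_mat)
  have PQt: "transpose P ** transpose Q = mat 1"
    using QP by (metis matrix_transpose_mul transpose_mat)
  have fQ: "f = transpose Q ** ?h ** Q"
  proof -
    have "transpose Q ** ?h ** Q = (transpose Q ** transpose P) ** f ** (P ** Q)"
      unfolding PfP[symmetric] by (simp add: matrix_mul_assoc)
    thus ?thesis using QPt PQ by simp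
  qed
  define K where "K = P ** ?h ** transpose P"
  have fK: "f ** K = mat 1"
  proof -
    have "f ** K = transpose Q ** (?h ** (Q ** P) ** ?h) ** transpose P"
      unfolding fQ K_def by (simp add: matrix_mul_assoc)
    also have "\<dots> = mat 1" using QP QPt by (simp add: eta_sq)
    finally show ?thesis .
  qed
  have Kf: "K ** f = mat 1" using fK matrix_left_right_inverse by blast
  have gK: "\<gamma> ** K = K ** transpose \<gamma>"
  proof -
    have "\<gamma> ** K = K ** (f ** \<gamma>) ** K" using Kf by (simp add: matrix_mul_assoc)
    also have "\<dots> = K ** (transpose \<gamma> ** f) ** K" using gt by simp
    also have "\<dots> = (K ** transpose \<gamma>) ** (f ** K)" by (simp add: matrix_mul_assoc)
    also have "\<dots> = K ** transpose \<gamma>" using fK by simp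
    finally show ?thesis .
  qed
  define e where "e = transpose (\<gamma> ** P)"
  define L where "L = Q"
  have E: "transpose e ** ?h ** e = matrix_inv g"
  proof -
    have "transpose e ** ?h ** e = \<gamma> ** K ** transpose \<gamma>"
      unfolding e_def K_def by (simp add: matrix_transpose_mul matrix_mul_assoc)
    also have "\<dots> = \<gamma> ** (K ** transpose \<gamma>)" by (simp add: matrix_mul_assoc)
    also have "\<dots> = \<gamma> ** \<gamma> ** K" unfolding gK[symmetric] by (simp add: matrix_mul_assoc)
    also have "\<dots> = matrix_inv g ** (f ** K)" using g1 by (simp add: matrix_mul_assoc)
    also have "\<dots> = matrix_inv g" using fK by simp
    finally show ?thesis .
  qed
  have Lf: "transpose L ** ?h ** L = f" unfolding L_def using fQ by simp
  have Ptf: "transpose P ** f = ?h ** Q"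
    unfolding fQ using PQt by (metis matrix_mul_assoc matrix_mul_lid)
  have fP: "f ** P = transpose Q ** ?h"
    unfolding fQ using QP by (metis matrix_mul_assoc matrix_mul_rid)
  have "transpose (e ** transpose (?h ** L)) = ?h ** Q ** \<gamma> ** P"
    unfolding e_def L_def by (simp add: matrix_transpose_mul matrix_mul_assoc)
  also have "\<dots> = transpose P ** (f ** \<gamma>) ** P" using Ptf by (simp add: matrix_mul_assoc)
  also have "\<dots> = transpose P ** transpose \<gamma> ** (f ** P)" using gt by (metis matrix_mul_assoc)
  also have "\<dots> = e ** transpose (?h ** L)"
    unfolding fP e_def L_def by (simp add: matrix_transpose_mul matrix_mul_assoc eta_tr)
  finally have "symmetric_mat (e ** transpose (?h ** L))" unfolding symmetric_mat_def .
  with E Lf show "\<exists>e L :: real^'n^'n.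
            transpose e ** minkowski t0 ** e = matrix_inv g \<and>
            transpose L ** minkowski t0 ** L = f \<and>
            symmetric_mat (e ** transpose (minkowski t0 ** L))" by blast
qed

end
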